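(* Let $(X,d)$ be a complete metric space with $|X|\geqslant 3$, and let $T\colon X\to X$ satisfy: (i) $T$ has no periodic points of prime period $2$, i.e. $T(T(x))\neq x$ for every $x\in X$ with $Tx\neq x$; (ii) $T$ is a generalized Ćirić–Reich–Rus type mapping on $X$, i.e. there exist $\alpha,\lambda\geqslant 0$ with $2\alpha+\frac{3\lambda}{2}<1$ such that $$d(Tx,Ty)+d(Ty,Tz)+d(Tx,Tz)\leqslant \alpha\big(d(x,y)+d(y,z)+d(z,x)\big)+\lambda\big(d(x,Tx)+d(y,Ty)+d(z,Tz)\big)$$ for all pairwise distinct $x,y,z\in X$. Then $T$ has a fixed point, and $T$ has at most two fixed points. *)

theory Defs
  imports "HOL-Analysis.Analysis"
begin

definition gen_ciric_reich_rus :: "('a::metric_space \<Rightarrow> 'a) \<Rightarrow> bool" where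
  "gen_ciric_reich_rus T \<longleftrightarrow>
     (\<exists>a l::real. a \<ge> 0 \<and> l \<ge> 0 \<and> 2 * a + 3 * l / 2 < 1 \<and>
        (\<forall>x y z. x \<noteq> y \<and> y \<noteq> z \<and> x \<noteq> z \<longrightarrow>
           dist (T x) (T y) + dist (T y) (T z) + dist (T x) (T z)
             \<le> a * (dist x y + dist y z + dist z x)
               + l * (dist x (T x) + dist y (T y) + dist z (T z))))"

end

theory Submission
  imports Defs
begin

lemma no_three_card:
  assumes "\<And>x y z. x \<in> S \<Longrightarrow> y \<in> S \<Longrightarrow> z \<in> S \<Longrightarrow> x \<noteq> y \<Longrightarrow> y \<noteq> z \<Longrightarrow> x \<noteq> z \<Longrightarrow> False"
  shows "finite S \<and> card S \<le> 2"
proof (rule ccontr)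
  assume "\<not> (finite S \<and> card S \<le> 2)"
  then obtain A where A: "A \<subseteq> S" "card A = 3"
  proof (cases "finite S")
    case True
    then show ?thesis using that \<open>\<not> (finite S \<and> card S \<le> 2)\<close>
      by (metis not_less_eq_eq numeral_2_eq_2 numeral_3_eq_3 obtain_subset_with_card_n)
  next
    case False
    then show ?thesis using that infinite_arbitrarily_large by blast
  qed
  then obtain x y z where "A = {x,y,z}" "x \<noteq> y" "y \<noteq> z" "x \<noteq> z"
    by (auto simp: card_3_iff)
  then show False using assms A by blast
qed

theorem theorem3p1:
  fixes T :: "'a::{metric_space, complete_space} \<Rightarrow> 'a"
  assumes three: "\<exists>a b c::'a. a \<noteq> b \<and> b \<noteq> c \<and> a \<noteq> c"
    and no_per2: "\<And>x. T x \<noteq> x \<Longrightarrow> T (T x) \<noteq> x"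
    and crr: "gen_ciric_reich_rus T"
  shows "(\<exists>x. T x = x) \<and> finite {x. T x = x} \<and> card {x. T x = x} \<le> 2"
proof -
  obtain a l :: real where a0: "a \<ge> 0" and l0: "l \<ge> 0" and al: "2 * a + 3 * l / 2 < 1"
    and H: "\<And>x y z. x \<noteq> y \<Longrightarrow> y \<noteq> z \<Longrightarrow> x \<noteq> z \<Longrightarrow>
           dist (T x) (T y) + dist (T y) (T z) + dist (T x) (T z)
             \<le> a * (dist x y + dist y z + dist z x)
               + l * (dist x (T x) + dist y (T y) + dist z (T z))"
    using crr unfolding gen_ciric_reich_rus_def by blast
  have card: "finite {x. T x = x} \<and> card {x. T x = x} \<le> 2"
  proof (rule no_three_card)
    fix x y z assume "x \<in> {x. T x = x}" "y \<in> {x. T x = x}" "z \<in> {x. T x = x}"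
      and d: "x \<noteq> y" "y \<noteq> z" "x \<noteq> z"
    hence f: "T x = x" "T y = y" "T z = z" by auto
    have "dist x y + dist y z + dist x z \<le> a * (dist x y + dist y z + dist x z)"
      using H[OF d] by (simp add: f dist_commute)
    moreover have "dist x y > 0" using d by simp
    moreover have "dist y z \<ge> 0" "dist x z \<ge> 0" by auto
    ultimately have P: "dist x y + dist y z + dist x z > 0" by linarith
    have "a * (dist x y + dist y z + dist x z) < 1 * (dist x y + dist y z + dist x z)"
      using al l0 P by (intro mult_strict_right_mono) auto
    then show False using \<open>dist x y + dist y z + dist x z \<le> a * (dist x y + dist y z + dist x z)\<close>
      by simp
  qed
  have ex: "\<exists>x. T x = x"
  proof (rule ccontr)
    assume "\<not> (\<exists>x. T x = x)"
    hence nf: "\<And>x. T x \<noteq> x" by auto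
    define s where "s n = (T ^^ n) undefined" for n
    have sS: "s (Suc n) = T (s n)" for n by (simp add: s_def)
    have d1: "s n \<noteq> s (Suc n)" for n using nf sS by metis
    have d2: "s n \<noteq> s (Suc (Suc n))" for n using nf no_per2 sS by metis
    define p where "p n = dist (s n) (s (Suc n)) + dist (s (Suc n)) (s (Suc (Suc n)))
       + dist (s n) (s (Suc (Suc n)))" for n
    define q where "q = (a + l) / (1 - l / 2)"
    have q0: "q \<ge> 0" and q1: "q < 1" using a0 l0 al by (auto simp: q_def field_simps)
    have step: "p (Suc n) \<le> q * p n" for n
    proof -
      have h: "p (Suc n) \<le> a * p n + l * (dist (s n) (s (Suc n)) + dist (s (Suc n)) (s (Suc (Suc n)))
                + dist (s (Suc (Suc n))) (s (Suc (Suc (Suc n)))))"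
        using H[OF d1[of n] d1[of "Suc n"] d2[of n]]
        by (simp add: p_def sS[symmetric] dist_commute)
      have t1: "dist (s n) (s (Suc n)) + dist (s (Suc n)) (s (Suc (Suc n))) \<le> p n"
        unfolding p_def by simp
      have t2: "2 * dist (s (Suc (Suc n))) (s (Suc (Suc (Suc n)))) \<le> p (Suc n)"
        unfolding p_def using dist_triangle[of "s (Suc (Suc n))" "s (Suc (Suc (Suc n)))" "s (Suc n)"]
        by (simp add: dist_commute)
      have "l * (dist (s n) (s (Suc n)) + dist (s (Suc n)) (s (Suc (Suc n)))) \<le> l * p n"
        using t1 l0 by (rule mult_left_mono)
      moreover have "l * (2 * dist (s (Suc (Suc n))) (s (Suc (Suc (Suc n))))) \<le> l * p (Suc n)"
        using t2 l0 by (rule mult_left_mono)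
      ultimately have "p (Suc n) * (1 - l / 2) \<le> (a + l) * p n"
        using h by (simp add: algebra_simps)
      moreover have "1 - l / 2 > 0" using al a0 by simp
      ultimately show ?thesis unfolding q_def by (simp add: field_simps)
    qed
    have pn: "p n \<le> q ^ n * p 0" for n
    proof (induction n)
      case 0 then show ?case by simp
    next
      case (Suc n)
      have "p (Suc n) \<le> q * p n" by (rule step)
      also have "\<dots> \<le> q * (q ^ n * p 0)" using Suc q0 by (rule mult_left_mono)
      finally show ?case by simp
    qed
    have dn: "dist (s n) (s (Suc n)) \<le> p 0 * q ^ n" for n
    proof -
      have "dist (s n) (s (Suc n)) \<le> p n" unfolding p_def by simp
      then show ?thesis using pn[of n] by (simp add: mult.commute)
    qed
    have p00: "p 0 \<ge> 0" unfolding p_def by simp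
    have dk: "dist (s m) (s (m + k)) \<le> p 0 * (\<Sum>i<k. q ^ (m + i))" for m k
    proof (induction k)
      case 0 then show ?case by simp
    next
      case (Suc k)
      have "dist (s m) (s (m + Suc k)) \<le> dist (s m) (s (m + k)) + dist (s (m + k)) (s (Suc (m + k)))"
        by (simp add: dist_triangle)
      also have "\<dots> \<le> p 0 * (\<Sum>i<k. q ^ (m + i)) + p 0 * q ^ (m + k)"
        using Suc dn[of "m + k"] by simp
      finally show ?case by (simp add: algebra_simps)
    qed
    have dk2: "dist (s m) (s (m + k)) \<le> p 0 * q ^ m / (1 - q)" for m k
    proof -
      have "(\<Sum>i<k. q ^ (m + i)) = q ^ m * (\<Sum>i<k. q ^ i)"
        by (simp add: power_add sum_distrib_left)
      moreover have "(\<Sum>i<k. q ^ i) = (1 - q ^ k) / (1 - q)"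
        using q1 by (simp add: sum_gp_strict)
      moreover have "(1 - q ^ k) / (1 - q) \<le> 1 / (1 - q)" using q0 q1
        by (simp add: divide_right_mono)
      moreover have "q ^ m \<ge> 0" using q0 by simp
      ultimately have "(\<Sum>i<k. q ^ (m + i)) \<le> q ^ m * (1 / (1 - q))"
        by (metis mult_left_mono)
      hence "p 0 * (\<Sum>i<k. q ^ (m + i)) \<le> p 0 * (q ^ m * (1 / (1 - q)))"
        using p00 by (rule mult_left_mono)
      thus ?thesis using dk[of m k] by simp
    qed
    have lim0: "(\<lambda>m. p 0 * q ^ m / (1 - q)) \<longlonglongrightarrow> 0"
      using q0 q1 by (auto intro!: tendsto_eq_intros LIMSEQ_power_zero)
    have "Cauchy s"
    proof (rule CauchyI')
      fix e :: real assume "0 < e"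
      then obtain M where M: "\<And>m. m \<ge> M \<Longrightarrow> p 0 * q ^ m / (1 - q) < e"
        using lim0 order_tendstoD(2)[OF lim0 \<open>0 < e\<close>] unfolding eventually_sequentially by blast
      show "\<exists>M. \<forall>m\<ge>M. \<forall>n>m. dist (s m) (s n) < e"
      proof (intro exI allI impI)
        fix m n assume "m \<ge> M" "n > m"
        then show "dist (s m) (s n) < e"
          using dk2[of m "n - m"] M[of m] by simp
      qed
    qed
    then obtain xs where xs: "s \<longlonglongrightarrow> xs"
      using Cauchy_convergent_iff convergent_def by blast
    have ppos: "p n > 0" for n
      unfolding p_def using d1[of n] by (simp add: add_pos_nonneg)
    have pdec: "p (Suc n) < p n" for n
    proof -
      have "q * p n < 1 * p n" using q1 ppos[of n] by (rule mult_strict_right_mono)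
      then show ?thesis using step[of n] by simp
    qed
    have pdec2: "p m < p n" if "n < m" for n m
      using that
    proof (induction m)
      case 0 then show ?case by simp
    next
      case (Suc m)
      then show ?case using pdec[of m] by (metis less_Suc_eq order.strict_trans)
    qed
    have sshift: "s (n + k) = (T ^^ k) (s n)" for n k
      by (simp add: s_def funpow_add add.commute)
    have sinj: "n = m" if "s n = s m" for n m
    proof (rule ccontr)
      assume "n \<noteq> m"
      have sk: "s (n + k) = s (m + k)" for k using that sshift by metis
      have e: "s n = s m" "s (Suc n) = s (Suc m)" "s (Suc (Suc n)) = s (Suc (Suc m))"
        using sk[of 0] sk[of 1] sk[of 2] by (simp_all add: numeral_2_eq_2)
      hence "p n = p m" unfolding p_def by simp
      moreover have "n < m \<or> m < n" using \<open>n \<noteq> m\<close> by arith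
      ultimately show False using pdec2[of n m] pdec2[of m n] by auto
    qed
    obtain N where N: "\<And>n. n \<ge> N \<Longrightarrow> s n \<noteq> xs"
    proof (cases "\<exists>k. s k = xs")
      case True
      then obtain k where "s k = xs" by blast
      show ?thesis
      proof (rule that)
        fix n assume "Suc k \<le> n"
        show "s n \<noteq> xs"
        proof
          assume "s n = xs"
          then have "n = k" using sinj \<open>s k = xs\<close> by metis
          then show False using \<open>Suc k \<le> n\<close> by simp
        qed
      qed
    next
      case False then show ?thesis using that by blast
    qed
    have ev: "eventually (\<lambda>n. dist (T xs) (s (Suc n)) + dist (s (Suc n)) (s (Suc (Suc n))) + dist (T xs) (s (Suc (Suc n)))
             \<le> a * (dist xs (s n) + dist (s n) (s (Suc n)) + dist (s (Suc n)) xs)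
               + l * (dist xs (T xs) + dist (s n) (s (Suc n)) + dist (s (Suc n)) (s (Suc (Suc n))))) sequentially"
      unfolding eventually_sequentially
    proof (intro exI allI impI)
      fix n assume "n \<ge> N"
      hence "xs \<noteq> s n" "xs \<noteq> s (Suc n)" using N by (metis le_Suc_eq)+
      then show "dist (T xs) (s (Suc n)) + dist (s (Suc n)) (s (Suc (Suc n))) + dist (T xs) (s (Suc (Suc n)))
             \<le> a * (dist xs (s n) + dist (s n) (s (Suc n)) + dist (s (Suc n)) xs)
               + l * (dist xs (T xs) + dist (s n) (s (Suc n)) + dist (s (Suc n)) (s (Suc (Suc n))))"
        using H[OF \<open>xs \<noteq> s n\<close> d1[of n] \<open>xs \<noteq> s (Suc n)\<close>] by (simp only: sS[symmetric])
    qed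
    have xs1: "(\<lambda>n. s (Suc n)) \<longlonglongrightarrow> xs" using xs by (rule LIMSEQ_Suc)
    have xs2: "(\<lambda>n. s (Suc (Suc n))) \<longlonglongrightarrow> xs" using xs1 by (rule LIMSEQ_Suc)
    have L: "(\<lambda>n. dist (T xs) (s (Suc n)) + dist (s (Suc n)) (s (Suc (Suc n))) + dist (T xs) (s (Suc (Suc n))))
       \<longlonglongrightarrow> dist (T xs) xs + dist xs xs + dist (T xs) xs"
      by (intro tendsto_add tendsto_dist tendsto_const xs1 xs2)
    have R: "(\<lambda>n. a * (dist xs (s n) + dist (s n) (s (Suc n)) + dist (s (Suc n)) xs)
               + l * (dist xs (T xs) + dist (s n) (s (Suc n)) + dist (s (Suc n)) (s (Suc (Suc n)))))
       \<longlonglongrightarrow> a * (dist xs xs + dist xs xs + dist xs xs) + l * (dist xs (T xs) + dist xs xs + dist xs xs)"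
      by (intro tendsto_add tendsto_mult tendsto_dist tendsto_const xs xs1 xs2)
    have "dist (T xs) xs + dist xs xs + dist (T xs) xs
       \<le> a * (dist xs xs + dist xs xs + dist xs xs) + l * (dist xs (T xs) + dist xs xs + dist xs xs)"
      by (rule tendsto_le[OF trivial_limit_sequentially R L ev])
    hence "2 * dist xs (T xs) \<le> l * dist xs (T xs)" by (simp add: dist_commute)
    moreover have "dist xs (T xs) > 0" using nf[of xs] by (simp add: dist_commute)
    moreover have "l * dist xs (T xs) < 2 * dist xs (T xs)"
      using al a0 \<open>dist xs (T xs) > 0\<close> by (intro mult_strict_right_mono) auto
    ultimately show False by linarith
  qed
  show ?thesis using ex card by blast
qed

end
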